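(* Let $\Gamma$ be a typing environment, $u$ an identifier, $\vec T$ a tuple of types and $a_1,a_2$ attributes, and suppose the environment $\Gamma, u:[\vec T]^{a_1}, u:[\vec T]^{a_2}$ is consistent, i.e., it is derivable from some typing environment $\Gamma'$ that is a partial function by applying the structural rules. Then $\Gamma, u:[\vec T]^{a_1-1}, u:[\vec T]^{a_2-1}$ is derivable from the same environment $\Gamma'$ by applying the structural rules, and is therefore consistent.
   Context: Types: $T ::= [T_1,\dots,T_n]^{a} \mid \mathsf{Proc}$ (channel type carrying an $n$-tuple of values, with usage attribute $a$; and the type of process variables). Attributes: $a ::= \mathsf{aff}$ (affine) $\mid \mathsf{un}$ (unrestricted) $\mid \bullet_i$ (unique after $i$ steps, $i\in\mathbb N$). Identifiers $u,v$ range over channel names and variables; process variables $X$ are also given types. A typing environment is a finite multiset of assumptions $u:T$ (not a priori a partial function). Type splitting $T = T_1\circ T_2$ is given by: $[\vec T]^{\mathsf{un}} = [\vec T]^{\mathsf{un}}\circ[\vec T]^{\mathsf{un}}$; $\mathsf{Proc}=\mathsf{Proc}\circ\mathsf{Proc}$; $[\vec T]^{\bullet_i} = [\vec T]^{\mathsf{aff}}\circ[\vec T]^{\bullet_{i+1}}$ (nothing else splits). Subtyping is given by the rules $\bullet_i\le\bullet_{i+1}$, $\bullet_{i+1}\le\mathsf{un}$, $\mathsf{un}\le\mathsf{aff}$, and $[\vec T]^{a_1}\le[\vec T]^{a_2}$ whenever $a_1\le a_2$. The structural rules of the type system (for judgements $\Gamma\vdash P$) are: (Contraction) if $T=T_1\circ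 T_2$ and $\Gamma,u:T_1,u:T_2\vdash P$ then $\Gamma,u:T\vdash P$; (Weakening) if $\Gamma\vdash P$ then $\Gamma,u:T\vdash P$; (Subtyping) if $\Gamma,u:T_2\vdash P$ and $T_1\le T_2$ then $\Gamma,u:T_1\vdash P$; (Revision) if $\Gamma,u:[\vec T_2]^{\bullet_0}\vdash P$ then $\Gamma,u:[\vec T_1]^{\bullet_0}\vdash P$. An environment $\Delta$ is derivable from $\Gamma'$ by applying the structural rules if $\Delta$ arises from $\Gamma'$ by finitely many of the corresponding environment transformations (reading each rule from conclusion to premise): replacing $u:T$ by $u:T_1,u:T_2$ where $T=T_1\circ T_2$; removing an assumption; replacing $u:T_1$ by $u:T_2$ where $T_1\le T_2$; replacing $u:[\vec T_1]^{\bullet_0}$ by $u:[\vec T_2]^{\bullet_0}$. An environment is consistent if it is derivable in this way from an environment that is a partial function (at most one assumption per identifier). Usage decrement: for an environment $\Gamma$, $\Gamma, u:[\vec T]^{a-1}$ denotes $\Gamma$ if $a=\mathsf{aff}$; $\Gamma,u:[\vec T]^{\mathsf{un}}$ if $a=\mathsf{un}$; and $\Gamma,u:[\vec T]^{\bullet_i}$ if $a=\bullet_{i+1}$ (it is undefined for $a=\bullet_0$). *)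

theory Defs
  imports Main "HOL-Library.Multiset"
begin

text \<open>Usage attributes: affine, unrestricted, unique after i steps.\<close>
datatype attr = Aff | Unr | Bul nat

datatype ty = Chan "ty list" attr | Proc

inductive sub_attr :: "attr \<Rightarrow> attr \<Rightarrow> bool" where
  sa_refl: "sub_attr a a"
| sa_bul: "sub_attr (Bul i) (Bul (Suc i))"
| sa_bul_un: "sub_attr (Bul (Suc i)) Unr"
| sa_un_aff: "sub_attr Unr Aff"
| sa_trans: "sub_attr a b \<Longrightarrow> sub_attr b c \<Longrightarrow> sub_attr a c"

inductive sub_ty :: "ty \<Rightarrow> ty \<Rightarrow> bool" where
  st_refl: "sub_ty T T"
| st_chan: "sub_attr a1 a2 \<Longrightarrow> sub_ty (Chan Ts a1) (Chan Ts a2)"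

text \<open>Type splitting: split T T1 T2 means T = T1 \<circ> T2.\<close>
inductive split_ty :: "ty \<Rightarrow> ty \<Rightarrow> ty \<Rightarrow> bool" where
  sp_un: "split_ty (Chan Ts Unr) (Chan Ts Unr) (Chan Ts Unr)"
| sp_proc: "split_ty Proc Proc Proc"
| sp_bul: "split_ty (Chan Ts (Bul i)) (Chan Ts Aff) (Chan Ts (Bul (Suc i)))"

type_synonym 'i env = "('i \<times> ty) multiset"

text \<open>One environment transformation (structural rules read conclusion to premise).\<close>
inductive env_step :: "'i env \<Rightarrow> 'i env \<Rightarrow> bool" where
  es_contr: "split_ty T T1 T2 \<Longrightarrow>
     env_step (G + {#(u, T)#}) (G + {#(u, T1), (u, T2)#})"
| es_weak: "env_step (G + {#x#}) G"
| es_sub: "sub_ty T1 T2 \<Longrightarrow> env_step (G + {#(u, T1)#}) (G + {#(u, T2)#})"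
| es_rev: "env_step (G + {#(u, Chan Ts1 (Bul 0))#}) (G + {#(u, Chan Ts2 (Bul 0))#})"

definition derivable :: "'i env \<Rightarrow> 'i env \<Rightarrow> bool" where
  "derivable G' D \<longleftrightarrow> env_step\<^sup>*\<^sup>* G' D"

definition partial_env :: "'i env \<Rightarrow> bool" where
  "partial_env G \<longleftrightarrow> (\<forall>u. size (filter_mset (\<lambda>p. fst p = u) G) \<le> 1)"

definition consistent :: "'i env \<Rightarrow> bool" where
  "consistent D \<longleftrightarrow> (\<exists>G'. partial_env G' \<and> derivable G' D)"

text \<open>Usage decrement of a single assumption u : [Ts]^a, as the multiset it
  contributes to the environment; None when undefined (a = bullet_0).\<close>
fun dec_assm :: "'i \<Rightarrow> ty list \<Rightarrow> attr \<Rightarrow> 'i env option" where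
  "dec_assm u Ts Aff = Some {#}"
| "dec_assm u Ts Unr = Some {#(u, Chan Ts Unr)#}"
| "dec_assm u Ts (Bul (Suc i)) = Some {#(u, Chan Ts (Bul i))#}"
| "dec_assm u Ts (Bul 0) = None"

end

theory Submission
  imports Defs
begin

lemma ms_single:
  assumes "H + {#x#} = K + {#b#}"
  shows "(x = b \<and> H = K) \<or> (\<exists>H'. H = H' + {#b#} \<and> K = H' + {#x#})"
proof (cases "x = b")
  case True then show ?thesis using assms by simp
next
  case False
  have "x \<in># K + {#b#}" by (metis assms add_mset_add_single union_single_eq_member)
  then have "x \<in># K" using False by auto
  then obtain K0 where K0: "K = K0 + {#x#}" by (metis insert_DiffM2 add_mset_add_single)
  then have "H = K0 + {#b#}" using assms by (simp add: add_mset_commute)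
  then show ?thesis using K0 by blast
qed

lemma ms_one:
  assumes "H + {#y#} = K + {#a,b#}"
  shows "(y = a \<and> H = K + {#b#}) \<or> (y = b \<and> H = K + {#a#}) \<or>
         (\<exists>H'. H = H' + {#a,b#} \<and> K = H' + {#y#})"
proof -
  have e: "H + {#y#} = (K + {#a#}) + {#b#}" using assms by (simp add: add_mset_commute)
  from ms_single[OF e] show ?thesis
  proof (elim disjE exE conjE)
    fix H' assume h: "H = H' + {#b#}" "K + {#a#} = H' + {#y#}"
    from ms_single[OF h(2)] show ?thesis
      using h(1) by (auto simp: add_mset_commute)
  qed (auto simp: add_mset_commute)
qed

lemma ms_two:
  assumes "H + {#x,y#} = K + {#a,b#}"
  shows "(H = K \<and> {#x,y#} = {#a,b#}) \<or>
         (\<exists>H'. H = H' + {#b#} \<and> ((a = x \<and> K = H' + {#y#}) \<or> (a = y \<and> K = H' + {#x#}))) \<or>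
         (\<exists>H'. H = H' + {#a#} \<and> ((b = x \<and> K = H' + {#y#}) \<or> (b = y \<and> K = H' + {#x#}))) \<or>
         (\<exists>H'. H = H' + {#a,b#} \<and> K = H' + {#x,y#})"
proof -
  have e: "(H + {#x#}) + {#y#} = K + {#a,b#}" using assms by (simp add: add_mset_commute)
  from ms_one[OF e] show ?thesis
  proof (elim disjE exE conjE)
    assume h: "y = a" "H + {#x#} = K + {#b#}"
    from ms_single[OF h(2)] show ?thesis using h(1) by (auto simp: add_mset_commute)
  next
    assume h: "y = b" "H + {#x#} = K + {#a#}"
    from ms_single[OF h(2)] show ?thesis using h(1) by (auto simp: add_mset_commute)
  next
    fix H'' assume h: "H + {#x#} = H'' + {#a,b#}" "K = H'' + {#y#}"
    from ms_one[OF h(1)] show ?thesis using h(2) by (auto simp: add_mset_commute)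
  qed
qed

lemma st_weak: "env_step\<^sup>*\<^sup>* G' (X + {#x#}) \<Longrightarrow> env_step\<^sup>*\<^sup>* G' X"
  by (metis es_weak rtranclp.rtrancl_into_rtrancl)

lemma st_sub: "sub_ty T1 T2 \<Longrightarrow> env_step\<^sup>*\<^sup>* G' (X + {#(v,T1)#}) \<Longrightarrow> env_step\<^sup>*\<^sup>* G' (X + {#(v,T2)#})"
  by (metis es_sub rtranclp.rtrancl_into_rtrancl)

lemma st_split: "split_ty T T1 T2 \<Longrightarrow> env_step\<^sup>*\<^sup>* G' (X + {#(v,T)#}) \<Longrightarrow> env_step\<^sup>*\<^sup>* G' (X + {#(v,T1),(v,T2)#})"
  by (metis es_contr rtranclp.rtrancl_into_rtrancl)

lemma st_rev: "env_step\<^sup>*\<^sup>* G' (X + {#(v,Chan Ts1 (Bul 0))#}) \<Longrightarrow> env_step\<^sup>*\<^sup>* G' (X + {#(v,Chan Ts2 (Bul 0))#})"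
  by (metis es_rev rtranclp.rtrancl_into_rtrancl)

lemma sub_bul_le: "i \<le> j \<Longrightarrow> sub_attr (Bul i) (Bul j)"
proof (induction j rule: dec_induct)
  case base then show ?case by (rule sa_refl)
next
  case (step n) then show ?case using sa_bul sa_trans by blast
qed

lemma sub_bul_unr: "sub_attr (Bul i) Unr"
  using sa_bul sa_bul_un sa_trans by blast

lemma sub_attr_cases: "sub_attr a b \<Longrightarrow> b = Aff \<or> (b = Unr \<and> a \<noteq> Aff) \<or> (\<exists>i j. a = Bul i \<and> b = Bul j \<and> i \<le> j)"
  apply (induction rule: sub_attr.induct)
      apply auto
  apply (metis attr.exhaust)+
  done

lemma dec_mono:
  assumes "sub_attr c a" "dec_assm u Ts c = Some M" "env_step\<^sup>*\<^sup>* G' (X + M)"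
  shows "\<exists>M'. dec_assm u Ts a = Some M' \<and> env_step\<^sup>*\<^sup>* G' (X + M')"
proof -
  have cM: "M = {#} \<or> (\<exists>y. M = {#y#})"
    using assms(2) by (cases "(u, Ts, c)" rule: dec_assm.cases) auto
  have w: "env_step\<^sup>*\<^sup>* G' X"
    using cM assms(3) st_weak by (metis add.right_neutral add_mset_add_single)
  from sub_attr_cases[OF assms(1)] show ?thesis
  proof (elim disjE exE conjE)
    assume "a = Aff"
    then show ?thesis using w by simp
  next
    assume h: "a = Unr" "c \<noteq> Aff"
    show ?thesis
    proof (cases c)
      case Aff then show ?thesis using h by simp
    next
      case Unr then show ?thesis using h assms(2,3) by simp
    next
      case (Bul n)
      then obtain i where i: "n = Suc i" using assms(2) by (cases n) auto
      have "M = {#(u, Chan Ts (Bul i))#}" using assms(2) Bul i by simp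
      then have "env_step\<^sup>*\<^sup>* G' (X + {#(u, Chan Ts (Bul i))#})" using assms(3) by simp
      from st_sub[OF st_chan[OF sub_bul_unr] this]
      have "env_step\<^sup>*\<^sup>* G' (X + {#(u, Chan Ts Unr)#})" .
      then show ?thesis using h by simp
    qed
  next
    fix i j assume h: "c = Bul i" "a = Bul j" "i \<le> j"
    then obtain i' where i': "i = Suc i'" using assms(2) by (cases i) auto
    then obtain j' where j': "j = Suc j'" "i' \<le> j'" using h by (cases j) auto
    have "M = {#(u, Chan Ts (Bul i'))#}" using assms(2) h i' by simp
    then have "env_step\<^sup>*\<^sup>* G' (X + {#(u, Chan Ts (Bul i'))#})" using assms(3) by simp
    from st_sub[OF st_chan[OF sub_bul_le[OF j'(2)]] this]
    have "env_step\<^sup>*\<^sup>* G' (X + {#(u, Chan Ts (Bul j'))#})" .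
    then show ?thesis using h j' by simp
  qed
qed

lemma partial_two:
  assumes "partial_env G" "G = K + {#(u,T1),(u,T2)#}"
  shows False
proof -
  have "filter_mset (\<lambda>p. fst p = u) G = filter_mset (\<lambda>p. fst p = u) K + {#(u,T1),(u,T2)#}"
    using assms(2) by simp
  then have a: "size (filter_mset (\<lambda>p. fst p = u) G) \<ge> 2" by simp
  have "size (filter_mset (\<lambda>p. fst p = u) G) \<le> 1" using assms(1) unfolding partial_env_def by blast
  then show False using a by linarith
qed

lemma sub_ty_chan_inv: "sub_ty T (Chan Ts a) \<Longrightarrow> \<exists>c. T = Chan Ts c \<and> sub_attr c a"
  by (cases rule: sub_ty.cases) (auto intro: sa_refl)

lemma ms_pair: "{#x,y#} = {#a,b#} \<Longrightarrow> (x = a \<and> y = b) \<or> (x = b \<and> y = a)"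
  by (metis add_mset_eq_single add_mset_remove_trivial diff_union_swap insert_noteq_member)

lemma sub_one:
  assumes IH: "\<And>K Ts1 a1 Ts2 a2. E = K + {#(u,Chan Ts1 a1),(u,Chan Ts2 a2)#} \<Longrightarrow>
      \<exists>M1 M2. dec_assm u Ts1 a1 = Some M1 \<and> dec_assm u Ts2 a2 = Some M2 \<and> env_step\<^sup>*\<^sup>* G' (K + M1 + M2)"
    and "sub_ty T1 T2" "E = G + {#(v,T1)#}" "(v,T2) = (u, Chan TsA a)" "G = K + {#(u, Chan TsB b)#}"
  shows "\<exists>MA MB. dec_assm u TsA a = Some MA \<and> dec_assm u TsB b = Some MB \<and> env_step\<^sup>*\<^sup>* G' (K + MA + MB)"
proof -
  obtain c where c: "T1 = Chan TsA c" "sub_attr c a" using sub_ty_chan_inv assms(2,4) by blast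
  have "E = K + {#(u,Chan TsA c),(u,Chan TsB b)#}" using assms(3,4,5) c by (simp add: add_mset_commute)
  from IH[OF this] obtain M1 M2 where m: "dec_assm u TsA c = Some M1" "dec_assm u TsB b = Some M2"
     "env_step\<^sup>*\<^sup>* G' ((K + M2) + M1)" by (auto simp: ac_simps)
  from dec_mono[OF c(2) m(1) m(3)] obtain M' where "dec_assm u TsA a = Some M'" "env_step\<^sup>*\<^sup>* G' (K + M2 + M')"
    by blast
  then show ?thesis using m(2) by (auto simp: ac_simps)
qed

lemma contr_one:
  assumes IH: "\<And>K Ts1 a1 Ts2 a2. E = K + {#(u,Chan Ts1 a1),(u,Chan Ts2 a2)#} \<Longrightarrow>
      \<exists>M1 M2. dec_assm u Ts1 a1 = Some M1 \<and> dec_assm u Ts2 a2 = Some M2 \<and> env_step\<^sup>*\<^sup>* G' (K + M1 + M2)"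
    and sp: "split_ty T T1 T2" and E: "E = G + {#(v,T)#}" and G: "G = H' + {#(u, Chan TsB b)#}"
    and A: "((u, Chan TsA a) = (v,T1) \<and> K = H' + {#(v,T2)#}) \<or> ((u, Chan TsA a) = (v,T2) \<and> K = H' + {#(v,T1)#})"
  shows "\<exists>MA MB. dec_assm u TsA a = Some MA \<and> dec_assm u TsB b = Some MB \<and> env_step\<^sup>*\<^sup>* G' (K + MA + MB)"
  using sp
proof cases
  case (sp_un Ts)
  then have eq: "v = u" "Ts = TsA" "a = Unr" "K = H' + {#(u, Chan TsA Unr)#}" using A by auto
  have "E = H' + {#(u,Chan TsA Unr),(u,Chan TsB b)#}" using E G sp_un eq by (simp add: add_mset_commute)
  from IH[OF this] obtain M1 M2 where m: "dec_assm u TsA Unr = Some M1" "dec_assm u TsB b = Some M2"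
     "env_step\<^sup>*\<^sup>* G' (H' + M1 + M2)" by blast
  have "M1 = {#(u,Chan TsA Unr)#}" using m(1) by simp
  then have "env_step\<^sup>*\<^sup>* G' ((H' + M2) + {#(u,Chan TsA Unr)#})" using m(3) by (simp add: ac_simps)
  from st_split[OF split_ty.sp_un this]
  have "env_step\<^sup>*\<^sup>* G' (K + {#(u,Chan TsA Unr)#} + M2)"
    using eq by (simp add: ac_simps)
  then show ?thesis using m(2) eq by auto
next
  case sp_proc then show ?thesis using A by auto
next
  case (sp_bul Ts i)
  from A show ?thesis
  proof (elim disjE conjE)
    assume a: "(u, Chan TsA a) = (v, T1)" and K: "K = H' + {#(v, T2)#}"
    then have eq: "v = u" "Ts = TsA" "a = Aff" using sp_bul by auto
    have "E = H' + {#(u,Chan TsA (Bul i)),(u,Chan TsB b)#}" using E G sp_bul eq by (simp add: add_mset_commute)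
    from IH[OF this] obtain M1 M2 where m: "dec_assm u TsA (Bul i) = Some M1" "dec_assm u TsB b = Some M2"
       "env_step\<^sup>*\<^sup>* G' (H' + M1 + M2)" by blast
    then obtain i' where i': "i = Suc i'" by (cases i) auto
    then have "M1 = {#(u, Chan TsA (Bul i'))#}" using m(1) by simp
    with m(3) have "env_step\<^sup>*\<^sup>* G' ((H' + M2) + {#(u, Chan TsA (Bul i'))#})" by (simp add: ac_simps)
    from st_sub[OF st_chan[OF sub_bul_le[of i' "Suc (Suc i')"]] this]
    have "env_step\<^sup>*\<^sup>* G' ((H' + M2) + {#(u, Chan TsA (Bul (Suc (Suc i'))))#})" by simp
    moreover have "K + {#} + M2 = (H' + M2) + {#(u, Chan TsA (Bul (Suc (Suc i'))))#}"
      using K eq sp_bul i' by (simp add: ac_simps)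
    ultimately show ?thesis using eq m(2) by auto
  next
    assume a: "(u, Chan TsA a) = (v, T2)" and K: "K = H' + {#(v, T1)#}"
    then have eq: "v = u" "Ts = TsA" "a = Bul (Suc i)" using sp_bul by auto
    have "E = H' + {#(u,Chan TsA (Bul i)),(u,Chan TsB b)#}" using E G sp_bul eq by (simp add: add_mset_commute)
    from IH[OF this] obtain M1 M2 where m: "dec_assm u TsA (Bul i) = Some M1" "dec_assm u TsB b = Some M2"
       "env_step\<^sup>*\<^sup>* G' (H' + M1 + M2)" by blast
    then obtain i' where i': "i = Suc i'" by (cases i) auto
    then have "M1 = {#(u, Chan TsA (Bul i'))#}" using m(1) by simp
    with m(3) have "env_step\<^sup>*\<^sup>* G' ((H' + M2) + {#(u, Chan TsA (Bul i'))#})" by (simp add: ac_simps)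
    from st_split[OF split_ty.sp_bul this]
    have "env_step\<^sup>*\<^sup>* G' ((H' + M2) + {#(u, Chan TsA Aff), (u, Chan TsA (Bul (Suc i')))#})" .
    moreover have "K + {#(u, Chan TsA (Bul (Suc i')))#} + M2 = (H' + M2) + {#(u, Chan TsA Aff), (u, Chan TsA (Bul (Suc i')))#}"
      using K eq sp_bul i' by (simp add: ac_simps) 
    ultimately show ?thesis using eq m(2) i' by auto
  qed
qed

lemma key:
  assumes "env_step\<^sup>*\<^sup>* G' D" "partial_env G'"
  shows "D = K + {#(u,Chan Ts1 a1),(u,Chan Ts2 a2)#} \<Longrightarrow>
      \<exists>M1 M2. dec_assm u Ts1 a1 = Some M1 \<and> dec_assm u Ts2 a2 = Some M2 \<and> env_step\<^sup>*\<^sup>* G' (K + M1 + M2)"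
  using assms(1)
proof (induction arbitrary: K Ts1 a1 Ts2 a2 rule: rtranclp_induct)
  case base show ?case using partial_two[OF assms(2) base.prems] by (rule FalseE)
next
  case (step E D)
  note IH = step.IH
  have dE: "env_step\<^sup>*\<^sup>* G' E" by fact
  have dD: "env_step\<^sup>*\<^sup>* G' D" using step.hyps by (rule rtranclp.rtrancl_into_rtrancl)
  show ?case
  proof (rule env_step.cases[OF step.hyps(2)])
    fix T T1 T2 G v assume es_contr: "E = G + {#(v, T)#}" "D = G + {#(v, T1), (v, T2)#}" "split_ty T T1 T2"
    have eqD: "G + {#(v,T1),(v,T2)#} = K + {#(u,Chan Ts1 a1),(u,Chan Ts2 a2)#}" using es_contr(2) step.prems by simp
    from ms_two[OF eqD] consider
        (c1) "G = K" "{#(v, T1), (v, T2)#} = {#(u, Chan Ts1 a1), (u, Chan Ts2 a2)#}"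
      | (c2) H' where "G = H' + {#(u, Chan Ts2 a2)#}"
        "(u, Chan Ts1 a1) = (v, T1) \<and> K = H' + {#(v, T2)#} \<or> (u, Chan Ts1 a1) = (v, T2) \<and> K = H' + {#(v, T1)#}"
      | (c3) H' where "G = H' + {#(u, Chan Ts1 a1)#}"
        "(u, Chan Ts2 a2) = (v, T1) \<and> K = H' + {#(v, T2)#} \<or> (u, Chan Ts2 a2) = (v, T2) \<and> K = H' + {#(v, T1)#}"
      | (c4) H' where "G = H' + {#(u, Chan Ts1 a1), (u, Chan Ts2 a2)#}" "K = H' + {#(v, T1), (v, T2)#}"
      by blast
    then show ?thesis
    proof cases
      case c1
      note h = c1
      from es_contr(3) show ?thesis
      proof cases
        case (sp_un Ts)
        then have e: "a1 = Unr" "a2 = Unr" "Ts1 = Ts" "Ts2 = Ts" "v = u" using ms_pair[OF h(2)] by auto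
        have "K + {#(u, Chan Ts Unr)#} + {#(u, Chan Ts Unr)#} = D" using es_contr(2) h(1) sp_un e by simp
        then show ?thesis using dD e by simp
      next
        case sp_proc then show ?thesis using ms_pair[OF h(2)] by auto
      next
        case (sp_bul Ts i)
        from ms_pair[OF h(2)] have
          "(a1 = Aff \<and> a2 = Bul (Suc i) \<or> a1 = Bul (Suc i) \<and> a2 = Aff) \<and> Ts1 = Ts \<and> Ts2 = Ts \<and> v = u"
          using sp_bul by auto
        moreover have "E = K + {#(u, Chan Ts (Bul i))#}" if "v = u" using es_contr(1) h(1) sp_bul that by simp
        ultimately show ?thesis using dE by auto
      qed
    next
      case (c2 H')
      note h = c2
      from contr_one[OF IH es_contr(3) es_contr(1) h] show ?thesis .
    next
      case (c3 H')
      note h = c3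
      have IH': "\<exists>M1 M2. dec_assm u Tb b = Some M1 \<and> dec_assm u Ta a = Some M2 \<and> env_step\<^sup>*\<^sup>* G' (K' + M1 + M2)"
        if "E = K' + {#(u,Chan Tb b),(u,Chan Ta a)#}" for K' Ta a Tb b
      proof -
        have "E = K' + {#(u,Chan Ta a),(u,Chan Tb b)#}" using that by (simp add: add_mset_commute)
        from IH[OF this] obtain M1 M2 where "dec_assm u Ta a = Some M1" "dec_assm u Tb b = Some M2"
          "env_step\<^sup>*\<^sup>* G' (K' + M1 + M2)" by blast
        moreover have "K' + M1 + M2 = K' + M2 + M1" by (simp add: ac_simps)
        ultimately show ?thesis by auto
      qed
      from contr_one[OF IH' es_contr(3) es_contr(1) h] obtain MA MB where
        m: "dec_assm u Ts2 a2 = Some MA" "dec_assm u Ts1 a1 = Some MB" "env_step\<^sup>*\<^sup>* G' (K + MA + MB)" by blast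
      moreover have "K + MA + MB = K + MB + MA" by (simp add: ac_simps)
      ultimately show ?thesis by auto
    next
      case (c4 H')
      note h = c4
      have "E = (H' + {#(v,T)#}) + {#(u,Chan Ts1 a1),(u,Chan Ts2 a2)#}" using es_contr(1) h(1) by (simp add: add_mset_commute)
      from IH[OF this] obtain M1 M2 where m: "dec_assm u Ts1 a1 = Some M1" "dec_assm u Ts2 a2 = Some M2"
        "env_step\<^sup>*\<^sup>* G' (H' + {#(v,T)#} + M1 + M2)" by blast
      have "env_step\<^sup>*\<^sup>* G' ((H' + M1 + M2) + {#(v,T)#})" using m(3) by (simp add: ac_simps)
      from st_split[OF es_contr(3) this] have "env_step\<^sup>*\<^sup>* G' (H' + M1 + M2 + {#(v, T1), (v, T2)#})" .
      moreover have "H' + M1 + M2 + {#(v, T1), (v, T2)#} = K + M1 + M2" using h(2) by (simp add: ac_simps)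
      ultimately show ?thesis using m(1,2) by auto
    qed
  next
    fix G x assume es_weak: "E = G + {#x#}" "D = G"
    have "E = (K + {#x#}) + {#(u,Chan Ts1 a1),(u,Chan Ts2 a2)#}" using es_weak step.prems by (simp add: add_mset_commute)
    from IH[OF this] obtain M1 M2 where "dec_assm u Ts1 a1 = Some M1" "dec_assm u Ts2 a2 = Some M2"
      "env_step\<^sup>*\<^sup>* G' ((K + M1 + M2) + {#x#})" by (auto simp: ac_simps)
    then show ?thesis using st_weak by blast
  next
    fix T1 T2 G v assume es_sub: "E = G + {#(v, T1)#}" "D = G + {#(v, T2)#}" "sub_ty T1 T2"
    have eqD: "G + {#(v,T2)#} = K + {#(u,Chan Ts1 a1),(u,Chan Ts2 a2)#}" using es_sub(2) step.prems by simp
    from ms_one[OF eqD] show ?thesis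
    proof (elim disjE exE conjE)
      assume "(v, T2) = (u, Chan Ts1 a1)" "G = K + {#(u, Chan Ts2 a2)#}"
      from sub_one[OF IH es_sub(3) es_sub(1) this] show ?thesis .
    next
      assume "(v, T2) = (u, Chan Ts2 a2)" "G = K + {#(u, Chan Ts1 a1)#}"
      from sub_one[OF IH es_sub(3) es_sub(1) this] show ?thesis by (auto simp: ac_simps)
    next
      fix H' assume h: "G = H' + {#(u, Chan Ts1 a1), (u, Chan Ts2 a2)#}" "K = H' + {#(v, T2)#}"
      have "E = (H' + {#(v,T1)#}) + {#(u,Chan Ts1 a1),(u,Chan Ts2 a2)#}" using es_sub h by (simp add: ac_simps)
      from IH[OF this] obtain M1 M2 where m: "dec_assm u Ts1 a1 = Some M1" "dec_assm u Ts2 a2 = Some M2"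
        "env_step\<^sup>*\<^sup>* G' ((H' + M1 + M2) + {#(v,T1)#})" by (auto simp: ac_simps)
      from st_sub[OF es_sub(3) m(3)] show ?thesis using m(1,2) h(2) by (auto simp: ac_simps)
    qed
  next
    fix G v Ts1' Ts2' assume es_rev: "E = G + {#(v, Chan Ts1' (Bul 0))#}" "D = G + {#(v, Chan Ts2' (Bul 0))#}"
    have eqD: "G + {#(v,Chan Ts2' (Bul 0))#} = K + {#(u,Chan Ts1 a1),(u,Chan Ts2 a2)#}" using es_rev(2) step.prems by simp
    from ms_one[OF eqD] show ?thesis
    proof (elim disjE exE conjE)
      assume h: "(v, Chan Ts2' (Bul 0)) = (u, Chan Ts1 a1)" "G = K + {#(u, Chan Ts2 a2)#}"
      have "E = K + {#(u,Chan Ts1' (Bul 0)),(u,Chan Ts2 a2)#}" using es_rev h by (simp add: ac_simps)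
      from IH[OF this] show ?thesis by simp
    next
      assume h: "(v, Chan Ts2' (Bul 0)) = (u, Chan Ts2 a2)" "G = K + {#(u, Chan Ts1 a1)#}"
      have "E = K + {#(u,Chan Ts1 a1),(u,Chan Ts1' (Bul 0))#}" using es_rev h by (simp add: ac_simps add_mset_commute)
      from IH[OF this] show ?thesis by simp
    next
      fix H' assume h: "G = H' + {#(u, Chan Ts1 a1), (u, Chan Ts2 a2)#}" "K = H' + {#(v, Chan Ts2' (Bul 0))#}"
      have "E = (H' + {#(v,Chan Ts1' (Bul 0))#}) + {#(u,Chan Ts1 a1),(u,Chan Ts2 a2)#}" using es_rev h by (simp add: ac_simps)
      from IH[OF this] obtain M1 M2 where m: "dec_assm u Ts1 a1 = Some M1" "dec_assm u Ts2 a2 = Some M2"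
        "env_step\<^sup>*\<^sup>* G' ((H' + M1 + M2) + {#(v,Chan Ts1' (Bul 0))#})" by (auto simp: ac_simps)
      from st_rev[OF m(3)] show ?thesis using m(1,2) h(2) by (auto simp: ac_simps)
    qed
  qed
qed

theorem mainTheorem1:
  fixes G G' :: "'i env" and u :: 'i and Ts :: "ty list" and a1 a2 :: attr
  assumes "partial_env G'"
      and "derivable G' (G + {#(u, Chan Ts a1)#} + {#(u, Chan Ts a2)#})"
  shows "\<exists>M1 M2. dec_assm u Ts a1 = Some M1 \<and> dec_assm u Ts a2 = Some M2 \<and>
           derivable G' (G + M1 + M2) \<and> consistent (G + M1 + M2)"
proof -
  have "env_step\<^sup>*\<^sup>* G' (G + {#(u, Chan Ts a1), (u, Chan Ts a2)#})"
    using assms(2) unfolding derivable_def by (simp add: add_mset_commute)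
  from key[OF this assms(1) refl] obtain M1 M2 where
    m: "dec_assm u Ts a1 = Some M1" "dec_assm u Ts a2 = Some M2" "env_step\<^sup>*\<^sup>* G' (G + M1 + M2)" by blast
  then show ?thesis using assms(1) unfolding consistent_def derivable_def by blast
qed

end
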